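(* Let $(A:B)$ be a bipartition of a set of $n$ qubits, let $\rho=|\psi\rangle\langle\psi|$ be a pure $n$-qubit state, let $\rho_A$ be its reduced state on $A$, and let $r$ be the Schmidt rank of $|\psi\rangle$ with respect to $(A:B)$. Then for any $n$-qubit Pauli string $P=P_A\otimes P_B$ (with $P_A$ labelled by $x_A$), $$p_\psi(x_A)=\frac{\mathrm{tr}(\rho_AP_A\rho_AP_A)}{2^{|A|}}\ge\frac{\mathrm{tr}(\rho P)^2}{2^{|A|}r}.$$
   Context: Pauli strings are labelled by $x\in\{0,1\}^{2n}$ via $P_x=i^{v\cdot w}(X^{v_1}Z^{w_1})\otimes\cdots\otimes(X^{v_n}Z^{w_n})$ for $x=(v_1,w_1,\dots,v_n,w_n)$, writing $x=(x_A,x_B)$ for the pairs $(v_i,w_i)$ belonging to qubits in $A$ and in $B$, so that $P_x=P_{x_A}\otimes P_{x_B}$. The Pauli distribution of a pure state is $p_\psi(x)=\mathrm{tr}(\psi P_x)^2/2^n$, and its marginal is $p_\psi(x_A)=\sum_{x_B}p_\psi(x_A,x_B)$. *)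

theory Defs
  imports Complex_Main
begin

text \<open>Qubits are labelled 0..n-1. A computational basis state on a set S of qubits is
  encoded by the subset s of S of qubits in state 1. A pure state is an amplitude
  function psi on subsets of {..<n}. A Pauli label x=(v,w) in {0,1}^(2n) is encoded by
  the pair of sets V = {i. v_i = 1}, W = {i. w_i = 1}.\<close>

type_synonym qstate = "nat set \<Rightarrow> complex"

text \<open>Matrix element <t| P_(V,W) |s> of P = i^(v.w) X^v Z^w:
  Z^w |s> = (-1)^(w.s) |s>, X^v |s> = |s xor v>.\<close>
definition pauli_elem :: "nat set \<Rightarrow> nat set \<Rightarrow> nat set \<Rightarrow> nat set \<Rightarrow> complex" where
  "pauli_elem V W t s =
     (if t = (s - V) \<union> (V - s) then \<i> ^ card (V \<inter> W) * (-1) ^ card (W \<inter> s) else 0)"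

definition pauli_expect :: "nat set \<Rightarrow> qstate \<Rightarrow> nat set \<Rightarrow> nat set \<Rightarrow> complex" where
  "pauli_expect Q psi V W =
     (\<Sum>t\<in>Pow Q. \<Sum>s\<in>Pow Q. cnj (psi t) * pauli_elem V W t s * psi s)"

text \<open>Pauli distribution p_psi(x) = tr(psi P_x)^2 / 2^n (the trace is real).\<close>
definition pauli_dist :: "nat \<Rightarrow> qstate \<Rightarrow> nat set \<Rightarrow> nat set \<Rightarrow> real" where
  "pauli_dist n psi V W = (Re (pauli_expect {..<n} psi V W))\<^sup>2 / 2 ^ n"

definition pauli_marginal :: "nat \<Rightarrow> nat set \<Rightarrow> qstate \<Rightarrow> nat set \<Rightarrow> nat set \<Rightarrow> real" where
  "pauli_marginal n A psi VA WA =
     (\<Sum>(VB, WB)\<in>Pow ({..<n} - A) \<times> Pow ({..<n} - A). pauli_dist n psi (VA \<union> VB) (WA \<union> WB))"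

definition reduced_state :: "nat \<Rightarrow> nat set \<Rightarrow> qstate \<Rightarrow> nat set \<Rightarrow> nat set \<Rightarrow> complex" where
  "reduced_state n A psi a a' =
     (\<Sum>b\<in>Pow ({..<n} - A). psi (a \<union> b) * cnj (psi (a' \<union> b)))"

definition tr_rPrP :: "nat \<Rightarrow> nat set \<Rightarrow> qstate \<Rightarrow> nat set \<Rightarrow> nat set \<Rightarrow> complex" where
  "tr_rPrP n A psi VA WA =
     (\<Sum>a1\<in>Pow A. \<Sum>a2\<in>Pow A. \<Sum>a3\<in>Pow A. \<Sum>a4\<in>Pow A.
        reduced_state n A psi a1 a2 * pauli_elem VA WA a2 a3 *
        reduced_state n A psi a3 a4 * pauli_elem VA WA a4 a1)"

definition schmidt_rank :: "nat \<Rightarrow> nat set \<Rightarrow> qstate \<Rightarrow> nat" where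
  "schmidt_rank n A psi =
     (LEAST r. \<exists>f g :: nat \<Rightarrow> nat set \<Rightarrow> complex.
        \<forall>a\<in>Pow A. \<forall>b\<in>Pow ({..<n} - A). psi (a \<union> b) = (\<Sum>i<r. f i a * g i b))"

end

theory Submission
  imports Defs "HOL-Analysis.L2_Norm"
begin

definition ip :: "nat set set \<Rightarrow> (nat set \<Rightarrow> complex) \<Rightarrow> (nat set \<Rightarrow> complex) \<Rightarrow> complex" where
  "ip S u v = (\<Sum>b\<in>S. u b * cnj (v b))"

lemma ip_cnj: "ip S v u = cnj (ip S u v)"
  unfolding ip_def by (simp add: mult.commute)

lemma ip_self: "ip S u u = of_real (\<Sum>b\<in>S. (cmod (u b))\<^sup>2)"
  unfolding ip_def of_real_sum by (simp only: complex_norm_square)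

lemma ip_diff_left: "ip S (\<lambda>b. x b - y b) v = ip S x v - ip S y v"
  unfolding ip_def by (simp add: algebra_simps sum_subtractf)

lemma ip_diff_right: "ip S u (\<lambda>b. x b - y b) = ip S u x - ip S u y"
  unfolding ip_def by (simp add: algebra_simps sum_subtractf)

lemma ip_sum_left: "ip S (\<lambda>b. \<Sum>j\<in>J. c j * w j b) v = (\<Sum>j\<in>J. c j * ip S (w j) v)"
  unfolding ip_def by (simp add: sum_distrib_left sum_distrib_right mult.assoc sum.swap[of _ S])

lemma ip_sum_right: "ip S u (\<lambda>b. \<Sum>j\<in>J. c j * w j b) = (\<Sum>j\<in>J. cnj (c j) * ip S u (w j))"
  unfolding ip_def by (simp add: sum_distrib_left sum_distrib_right algebra_simps sum.swap[of _ S])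

lemma ip_scale_left: "ip S (\<lambda>b. c * u b) v = c * ip S u v"
  unfolding ip_def by (simp add: sum_distrib_left algebra_simps)

lemma ip_scale_right: "ip S u (\<lambda>b. c * v b) = cnj c * ip S u v"
  unfolding ip_def by (simp add: sum_distrib_left algebra_simps)

lemma ip_div_left: "ip S (\<lambda>b. u b / c) v = ip S u v / c"
  unfolding ip_def by (simp add: sum_divide_distrib)

lemma ip_div_right: "ip S u (\<lambda>b. v b / c) = ip S u v / cnj c"
  unfolding ip_def by (simp add: sum_divide_distrib)

definition orthonormal :: "nat set set \<Rightarrow> nat \<Rightarrow> (nat \<Rightarrow> nat set \<Rightarrow> complex) \<Rightarrow> bool" where
  "orthonormal S r g \<longleftrightarrow> (\<forall>i<r. \<forall>j<r. ip S (g i) (g j) = (if i = j then 1 else 0))"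

lemma bessel:
  assumes "orthonormal S r g"
  shows "(\<Sum>j<r. (cmod (ip S u (g j)))\<^sup>2) \<le> Re (ip S u u)"
proof -
  define c where "c j = ip S u (g j)" for j
  define w where "w b = u b - (\<Sum>j<r. c j * g j b)" for b
  have o: "ip S (g j) (g k) = (if j = k then 1 else 0)" if "j < r" "k < r" for j k
    using assms that unfolding orthonormal_def by auto
  have e1: "ip S (\<lambda>b. \<Sum>j<r. c j * g j b) u = (\<Sum>j<r. c j * cnj (c j))"
    unfolding ip_sum_left by (rule sum.cong) (auto simp: c_def ip_cnj[of S _ u])
  have e2: "ip S u (\<lambda>b. \<Sum>j<r. c j * g j b) = (\<Sum>j<r. c j * cnj (c j))"
    unfolding ip_sum_right by (rule sum.cong) (auto simp: c_def mult.commute)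
  have e3: "ip S (\<lambda>b. \<Sum>j<r. c j * g j b) (\<lambda>b. \<Sum>j<r. c j * g j b) = (\<Sum>j<r. c j * cnj (c j))"
    by (simp add: ip_sum_left ip_sum_right o if_distrib cong: if_cong)
  have "ip S w w = ip S u u - (\<Sum>j<r. c j * cnj (c j))"
    unfolding w_def ip_diff_left ip_diff_right e1 e2 e3 by simp
  moreover have "Re (ip S w w) \<ge> 0" by (simp add: ip_self sum_nonneg)
  moreover have "(\<Sum>j<r. c j * cnj (c j)) = of_real (\<Sum>j<r. (cmod (c j))\<^sup>2)"
    unfolding of_real_sum by (simp only: complex_norm_square)
  ultimately have "ip S w w = ip S u u - of_real (\<Sum>j<r. (cmod (c j))\<^sup>2)" "Re (ip S w w) \<ge> 0"
    by simp_all
  then have "0 \<le> Re (ip S u u) - (\<Sum>j<r. (cmod (c j))\<^sup>2)"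
    by (metis Re_complex_of_real minus_complex.sel(1))
  then show ?thesis by (simp add: c_def)
qed

lemma ip_self_zero:
  assumes "finite S" "ip S u u = 0" "b \<in> S"
  shows "u b = 0"
proof -
  have "(\<Sum>b\<in>S. (cmod (u b))\<^sup>2) = 0" using assms(2) unfolding ip_self by (metis of_real_eq_0_iff)
  then have "\<forall>b\<in>S. (cmod (u b))\<^sup>2 = 0" using assms(1) by (subst (asm) sum_nonneg_eq_0_iff) auto
  then show ?thesis using assms(3) by auto
qed

lemma ip_self_Re: "ip S u u = of_real (Re (ip S u u))" "Re (ip S u u) \<ge> 0"
  by (simp_all add: ip_self sum_nonneg)

lemma gram_schmidt:
  assumes "finite SB"
  shows "\<exists>r' f' g'. r' \<le> r \<and> orthonormal SB r' g' \<and>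
     (\<forall>a. \<forall>b\<in>SB. (\<Sum>i<r. f i a * g i b) = (\<Sum>i<r'. f' i a * g' i b))"
proof (induction r)
  case 0
  show ?case by (rule exI[of _ 0]) (auto simp: orthonormal_def)
next
  case (Suc r)
  then obtain r' f' g' where r': "r' \<le> r" and on: "orthonormal SB r' g'"
    and dec: "\<forall>a. \<forall>b\<in>SB. (\<Sum>i<r. f i a * g i b) = (\<Sum>i<r'. f' i a * g' i b)" by blast
  have o: "ip SB (g' j) (g' k) = (if j = k then 1 else 0)" if "j < r'" "k < r'" for j k
    using on that unfolding orthonormal_def by auto
  define c where "c j = ip SB (g r) (g' j)" for j
  define u where "u b = g r b - (\<Sum>j<r'. c j * g' j b)" for b
  have uc: "ip SB u (g' k) = 0" if "k < r'" for k
  proof -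
    have "ip SB u (g' k) = c k - (\<Sum>j<r'. c j * (if j = k then 1 else 0))"
      unfolding u_def ip_diff_left ip_sum_left c_def
      by (intro arg_cong2[where f="(-)"] refl sum.cong) (auto simp: o that)
    then show ?thesis using that by (simp add: if_distrib cong: if_cong)
  qed
  have gr: "g r b = u b + (\<Sum>j<r'. c j * g' j b)" for b by (simp add: u_def)
  define f'' where "f'' j a = f' j a + f r a * c j" for j a
  have base: "(\<Sum>i<Suc r. f i a * g i b) = (\<Sum>j<r'. f'' j a * g' j b) + f r a * u b"
    if "b \<in> SB" for a b
    using dec that by (simp add: gr f''_def sum.distrib sum_distrib_left algebra_simps)
  show ?case
  proof (cases "ip SB u u = 0")
    case True
    then have "u b = 0" if "b \<in> SB" for b using ip_self_zero[OF assms] that by blast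
    then show ?thesis using base r' on by (intro exI[of _ r'] exI[of _ f''] exI[of _ g']) auto
  next
    case False
    define s where "s = sqrt (Re (ip SB u u))"
    have "Re (ip SB u u) \<noteq> 0" using False ip_self_Re(1)[of SB u] by (metis of_real_0)
    then have spos: "s > 0" using ip_self_Re(2)[of SB u] unfolding s_def by simp
    define g'' where "g'' = g'(r' := (\<lambda>b. (1 / of_real s) * u b))"
    define f3 where "f3 = f''(r' := (\<lambda>a. f r a * of_real s))"
    have on2: "orthonormal SB (Suc r') g''"
      unfolding orthonormal_def
    proof (intro allI impI)
      fix i j assume i: "i < Suc r'" and j: "j < Suc r'"
      have "s * s = Re (ip SB u u)" unfolding s_def using ip_self_Re(2)[of SB u] by simp
      then have uu: "ip SB u u = of_real (s * s)"
        using ip_self_Re(1)[of SB u] by metis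
      show "ip SB (g'' i) (g'' j) = (if i = j then 1 else 0)"
      proof (cases "i = r'")
        case True note i' = this
        show ?thesis
        proof (cases "j = r'")
          case True
          have "ip SB (\<lambda>b. (1 / of_real s) * u b) (\<lambda>b. (1 / of_real s) * u b)
              = (1 / of_real s) * (cnj (1 / of_real s) * ip SB u u)"
            by (simp only: ip_scale_left ip_scale_right)
          also have "\<dots> = 1" using spos uu by simp
          finally show ?thesis using True i' by (simp only: g''_def fun_upd_same) simp
        next
          case False
          then show ?thesis using i' j uc by (simp add: g''_def ip_div_left)
        qed
      next
        case False note i' = this
        show ?thesis
        proof (cases "j = r'")
          case True
          then show ?thesis using i' i uc ip_cnj[of SB u] by (simp add: g''_def ip_div_right)
        next
          case False
          then show ?thesis using i' i j o by (simp add: g''_def)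
        qed
      qed
    qed
    have "(\<Sum>i<Suc r. f i a * g i b) = (\<Sum>i<Suc r'. f3 i a * g'' i b)" if "b \<in> SB" for a b
      using base[OF that] spos by (simp add: f3_def g''_def)
    then show ?thesis using r' on2 by (intro exI[of _ "Suc r'"] exI[of _ f3] exI[of _ g'']) auto
  qed
qed

definition sd :: "nat set \<Rightarrow> nat set \<Rightarrow> nat set" where "sd X Y = (X - Y) \<union> (Y - X)"

lemma card_sd: assumes "finite X" "finite Y"
  shows "card (sd X Y) + 2 * card (X \<inter> Y) = card X + card Y"
proof -
  have "sd X Y = (X \<union> Y) - (X \<inter> Y)" unfolding sd_def by blast
  then have "card (sd X Y) = card (X \<union> Y) - card (X \<inter> Y)"
    using assms by (metis card_Diff_subset finite_Int inf_le1 le_supI1)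
  moreover have "card (X \<union> Y) + card (X \<inter> Y) = card X + card Y"
    using assms by (rule card_Un_Int[symmetric])
  moreover have "card (X \<inter> Y) \<le> card (X \<union> Y)" using assms by (intro card_mono) auto
  ultimately show ?thesis by linarith
qed

lemma neg1_sd:
  assumes "finite W"
  shows "(-1::'a::comm_ring_1) ^ card (W \<inter> X) * (-1) ^ card (W \<inter> Y) = (-1) ^ card (W \<inter> sd X Y)"
proof -
  have e: "W \<inter> sd X Y = sd (W \<inter> X) (W \<inter> Y)" unfolding sd_def by blast
  have c: "card (W \<inter> sd X Y) + 2 * card ((W \<inter> X) \<inter> (W \<inter> Y)) = card (W \<inter> X) + card (W \<inter> Y)"
    unfolding e using assms by (intro card_sd) auto
  have "(-1::'a) ^ card (W \<inter> X) * (-1) ^ card (W \<inter> Y) = (-1) ^ (card (W \<inter> X) + card (W \<inter> Y))"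
    by (simp add: power_add)
  also have "\<dots> = (-1) ^ (card (W \<inter> sd X Y) + 2 * card ((W \<inter> X) \<inter> (W \<inter> Y)))"
    using c by simp
  also have "\<dots> = (-1) ^ card (W \<inter> sd X Y)" by (simp add: power_add power_mult)
  finally show ?thesis .
qed

lemma sd_sd: "sd (sd a X) X = a" unfolding sd_def by blast

lemma pauli_elem_alt: "pauli_elem V W t s = (if t = sd s V then \<i> ^ card (V \<inter> W) * (-1) ^ card (W \<inter> s) else 0)"
  unfolding pauli_elem_def sd_def by simp

lemma sd_swap: "(t = sd s V) \<longleftrightarrow> (s = sd t V)"
  unfolding sd_def by blast

lemma pauli_herm:
  assumes "finite W"
  shows "cnj (pauli_elem V W t s) = pauli_elem V W s t"
proof (cases "t = sd s V")
  case True
  then have s: "s = sd t V" using sd_swap by blast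
  define k where "k = card (V \<inter> W)"
  define p where "p = card (W \<inter> s)"
  define q where "q = card (W \<inter> t)"
  have h1: "(-1::complex) ^ p * (-1) ^ k = (-1) ^ q"
    using neg1_sd[OF assms, of s V] True unfolding p_def k_def q_def by (simp add: Int_commute)
  have h2: "cnj (\<i> ^ k) = (-1) ^ k * \<i> ^ k"
    by (simp add: power_mult_distrib[symmetric])
  have "cnj (pauli_elem V W t s) = cnj (\<i> ^ k) * (-1) ^ p"
    using True unfolding pauli_elem_alt k_def p_def by simp
  also have "\<dots> = \<i> ^ k * ((-1) ^ p * (-1) ^ k)" unfolding h2 by (simp only: ac_simps)
  also have "\<dots> = pauli_elem V W s t"
    unfolding h1 using s unfolding pauli_elem_alt k_def q_def by simp
  finally show ?thesis .
next
  case False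
  then show ?thesis unfolding pauli_elem_alt using sd_swap by auto
qed

lemma char_sum:
  fixes B X :: "nat set"
  assumes "finite B" "X \<subseteq> B"
  shows "(\<Sum>W\<in>Pow B. (-1::complex) ^ card (X \<inter> W)) = (if X = {} then 2 ^ card B else 0)"
proof (cases "X = {}")
  case True
  then show ?thesis using assms by (simp add: card_Pow)
next
  case False
  then obtain x where x: "x \<in> X" by blast
  let ?f = "\<lambda>W. (-1::complex) ^ card (X \<inter> W)"
  have fl: "?f (sd W {x}) = - ?f W" for W
  proof -
    have "?f W * (-1) ^ card (X \<inter> {x}) = ?f (sd W {x})"
      using assms by (intro neg1_sd) (auto intro: finite_subset)
    moreover have "X \<inter> {x} = {x}" using x by auto
    ultimately show ?thesis by simp
  qed
  have "(\<Sum>W\<in>Pow B. ?f W) = (\<Sum>W\<in>Pow B. ?f (sd W {x}))"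
    by (rule sum.reindex_bij_witness[where i="\<lambda>W. sd W {x}" and j="\<lambda>W. sd W {x}"])
       (use x assms in \<open>auto simp: sd_sd, auto simp: sd_def\<close>)
  also have "\<dots> = - (\<Sum>W\<in>Pow B. ?f W)" by (simp add: fl sum_negf)
  finally show ?thesis using False by simp
qed

lemma pauli_split:
  fixes A B VA WA VB WB a a' b b' :: "nat set"
  assumes "A \<inter> B = {}" "finite A" "finite B" "VA \<subseteq> A" "WA \<subseteq> A" "a \<subseteq> A" "a' \<subseteq> A"
    "VB \<subseteq> B" "WB \<subseteq> B" "b \<subseteq> B" "b' \<subseteq> B"
  shows "pauli_elem (VA \<union> VB) (WA \<union> WB) (a \<union> b) (a' \<union> b') = pauli_elem VA WA a a' * pauli_elem VB WB b b'"
proof -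
  have c: "(a \<union> b = sd (a' \<union> b') (VA \<union> VB)) \<longleftrightarrow> (a = sd a' VA \<and> b = sd b' VB)"
  proof
    assume h: "a \<union> b = sd (a' \<union> b') (VA \<union> VB)"
    have "a = (a \<union> b) \<inter> A" "b = (a \<union> b) \<inter> B" using assms by auto
    moreover have "sd (a' \<union> b') (VA \<union> VB) \<inter> A = sd a' VA" "sd (a' \<union> b') (VA \<union> VB) \<inter> B = sd b' VB"
      using assms unfolding sd_def by auto
    ultimately show "a = sd a' VA \<and> b = sd b' VB" using h by auto
  next
    assume "a = sd a' VA \<and> b = sd b' VB"
    then show "a \<union> b = sd (a' \<union> b') (VA \<union> VB)" using assms unfolding sd_def by auto
  qed
  have e1: "(VA \<union> VB) \<inter> (WA \<union> WB) = (VA \<inter> WA) \<union> (VB \<inter> WB)" using assms by auto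
  have k: "card ((VA \<union> VB) \<inter> (WA \<union> WB)) = card (VA \<inter> WA) + card (VB \<inter> WB)"
    unfolding e1 using assms by (intro card_Un_disjoint) (auto intro: finite_subset)
  have e2: "(WA \<union> WB) \<inter> (a' \<union> b') = (WA \<inter> a') \<union> (WB \<inter> b')" using assms by auto
  have p: "card ((WA \<union> WB) \<inter> (a' \<union> b')) = card (WA \<inter> a') + card (WB \<inter> b')"
    unfolding e2 using assms by (intro card_Un_disjoint) (auto intro: finite_subset)
  show ?thesis unfolding pauli_elem_alt c k p by (simp add: power_add)
qed

lemma sd_eq_iff: "(b1 = sd b1' V) \<longleftrightarrow> (V = sd b1 b1')" unfolding sd_def by blast

lemma pauli_complete:
  fixes B b1 b1' b2 b2' :: "nat set"
  assumes "finite B" "b1 \<subseteq> B" "b1' \<subseteq> B" "b2 \<subseteq> B" "b2' \<subseteq> B"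
  shows "(\<Sum>(V, W)\<in>Pow B \<times> Pow B. pauli_elem V W b1 b1' * pauli_elem V W b2 b2')
     = (if b1 = b2' \<and> b2 = b1' then 2 ^ card B else 0)"
proof -
  define V0 where "V0 = sd b1 b1'"
  have V0B: "V0 \<in> Pow B" using assms unfolding V0_def sd_def by auto
  define G where "G = (\<Sum>W\<in>Pow B. pauli_elem V0 W b1 b1' * pauli_elem V0 W b2 b2')"
  have "(\<Sum>(V, W)\<in>Pow B \<times> Pow B. pauli_elem V W b1 b1' * pauli_elem V W b2 b2')
      = (\<Sum>V\<in>Pow B. \<Sum>W\<in>Pow B. pauli_elem V W b1 b1' * pauli_elem V W b2 b2')"
    by (rule sum.cartesian_product[symmetric])
  also have "\<dots> = (\<Sum>V\<in>Pow B. if V = V0 then G else 0)"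
  proof (rule sum.cong[OF refl])
    fix V assume "V \<in> Pow B"
    show "(\<Sum>W\<in>Pow B. pauli_elem V W b1 b1' * pauli_elem V W b2 b2') = (if V = V0 then G else 0)"
    proof (cases "V = V0")
      case True then show ?thesis by (simp add: G_def)
    next
      case False then show ?thesis by (simp add: pauli_elem_alt sd_eq_iff V0_def)
    qed
  qed
  also have "\<dots> = G" using V0B by (simp add: sum.delta[OF finite_Pow_iff[THEN iffD2, OF assms(1)]])
  finally have L: "(\<Sum>(V, W)\<in>Pow B \<times> Pow B. pauli_elem V W b1 b1' * pauli_elem V W b2 b2') = G" .
  have b1: "b1 = sd b1' V0" using sd_eq_iff V0_def by blast
  show ?thesis
  proof (cases "b2 = sd b2' V0")
    case False
    then have "G = 0" unfolding G_def pauli_elem_alt by simp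
    moreover have "\<not> (b1 = b2' \<and> b2 = b1')" using False unfolding V0_def sd_def by blast
    ultimately show ?thesis using L by simp
  next
    case True
    define X where "X = sd V0 (sd b1' b2')"
    have XB: "X \<subseteq> B" using assms V0B unfolding X_def sd_def by auto
    have "G = (\<Sum>W\<in>Pow B. (-1::complex) ^ card (X \<inter> W))"
      unfolding G_def
    proof (rule sum.cong[OF refl])
      fix W assume W: "W \<in> Pow B"
      have fW: "finite W" using W assms(1) by (auto intro: finite_subset)
      have "pauli_elem V0 W b1 b1' * pauli_elem V0 W b2 b2'
          = (\<i> ^ card (V0 \<inter> W) * \<i> ^ card (V0 \<inter> W)) * ((-1) ^ card (W \<inter> b1') * (-1) ^ card (W \<inter> b2'))"
        using b1 True unfolding pauli_elem_alt by (simp only: if_True refl simp_thms ac_simps)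
      also have "\<dots> = (-1) ^ card (W \<inter> V0) * (-1) ^ card (W \<inter> sd b1' b2')"
        by (simp add: neg1_sd[OF fW] power_mult_distrib[symmetric] Int_commute)
      also have "\<dots> = (-1) ^ card (X \<inter> W)"
        using neg1_sd[OF fW, of V0 "sd b1' b2'", where 'a=complex] by (simp add: X_def Int_commute)
      finally show "pauli_elem V0 W b1 b1' * pauli_elem V0 W b2 b2' = (-1) ^ card (X \<inter> W)" .
    qed
    also have "\<dots> = (if X = {} then 2 ^ card B else 0)" using char_sum[OF assms(1) XB] .
    finally have G: "G = (if X = {} then 2 ^ card B else 0)" .
    have "X = {} \<longleftrightarrow> b1 = b2'" unfolding X_def V0_def sd_def by blast
    moreover have "b1 = b2' \<Longrightarrow> b2 = b1'" using True unfolding V0_def sd_def by blast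
    ultimately show ?thesis using L G by auto
  qed
qed

lemma split_sum:
  fixes A N :: "nat set"
  assumes "A \<subseteq> N"
  shows "(\<Sum>s\<in>Pow N. h s) = (\<Sum>a\<in>Pow A. \<Sum>b\<in>Pow (N - A). h (a \<union> b))"
proof -
  have "(\<Sum>a\<in>Pow A. \<Sum>b\<in>Pow (N - A). h (a \<union> b)) = (\<Sum>(a, b)\<in>Pow A \<times> Pow (N - A). h (a \<union> b))"
    by (rule sum.cartesian_product)
  also have "\<dots> = (\<Sum>s\<in>Pow N. h s)"
    by (rule sum.reindex_bij_witness[where i="\<lambda>s. (s \<inter> A, s - A)" and j="\<lambda>(a, b). a \<union> b"])
       (use assms in auto)
  finally show ?thesis by simp
qed

lemma swap12: "(\<Sum>x\<in>S. \<Sum>y\<in>T. \<Sum>z\<in>U. F x y z) = (\<Sum>y\<in>T. \<Sum>z\<in>U. \<Sum>x\<in>S. F x y z)"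
proof -
  have "(\<Sum>x\<in>S. \<Sum>y\<in>T. \<Sum>z\<in>U. F x y z) = (\<Sum>y\<in>T. \<Sum>x\<in>S. \<Sum>z\<in>U. F x y z)"
    by (rule sum.swap)
  also have "\<dots> = (\<Sum>y\<in>T. \<Sum>z\<in>U. \<Sum>x\<in>S. F x y z)"
    by (rule sum.cong[OF refl], rule sum.swap)
  finally show ?thesis .
qed

lemma swap22: "(\<Sum>x\<in>S. \<Sum>y\<in>T. \<Sum>i\<in>I. \<Sum>j\<in>J. F x y i j) = (\<Sum>i\<in>I. \<Sum>j\<in>J. \<Sum>x\<in>S. \<Sum>y\<in>T. F x y i j)"
proof -
  have "(\<Sum>x\<in>S. \<Sum>y\<in>T. \<Sum>i\<in>I. \<Sum>j\<in>J. F x y i j) = (\<Sum>x\<in>S. \<Sum>i\<in>I. \<Sum>j\<in>J. \<Sum>y\<in>T. F x y i j)"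
    by (rule sum.cong[OF refl], rule swap12)
  also have "\<dots> = (\<Sum>i\<in>I. \<Sum>j\<in>J. \<Sum>x\<in>S. \<Sum>y\<in>T. F x y i j)"
    by (rule swap12)
  finally show ?thesis .
qed

lemma cs_complex:
  fixes x y :: "'i \<Rightarrow> complex"
  shows "(cmod (\<Sum>i\<in>I. x i * y i))\<^sup>2 \<le> (\<Sum>i\<in>I. (cmod (x i))\<^sup>2) * (\<Sum>i\<in>I. (cmod (y i))\<^sup>2)"
proof -
  have "cmod (\<Sum>i\<in>I. x i * y i) \<le> (\<Sum>i\<in>I. \<bar>cmod (x i)\<bar> * \<bar>cmod (y i)\<bar>)"
    by (rule order_trans[OF norm_sum]) (simp add: norm_mult)
  also have "\<dots> \<le> L2_set (\<lambda>i. cmod (x i)) I * L2_set (\<lambda>i. cmod (y i)) I"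
    by (rule L2_set_mult_ineq)
  finally have "(cmod (\<Sum>i\<in>I. x i * y i))\<^sup>2 \<le> (L2_set (\<lambda>i. cmod (x i)) I * L2_set (\<lambda>i. cmod (y i)) I)\<^sup>2"
    by (intro power_mono) auto
  also have "\<dots> = (\<Sum>i\<in>I. (cmod (x i))\<^sup>2) * (\<Sum>i\<in>I. (cmod (y i))\<^sup>2)"
    unfolding L2_set_def power_mult_distrib by (simp add: sum_nonneg)
  finally show ?thesis .
qed

lemma cs_count:
  fixes z :: "nat \<Rightarrow> complex"
  shows "(cmod (\<Sum>i<r. z i))\<^sup>2 \<le> real r * (\<Sum>i<r. (cmod (z i))\<^sup>2)"
  using cs_complex[of "\<lambda>_. 1" z "{..<r}"] by simp

definition Mm :: "nat set \<Rightarrow> (nat \<Rightarrow> nat set \<Rightarrow> complex) \<Rightarrow> nat set \<Rightarrow> nat set \<Rightarrow> nat \<Rightarrow> nat \<Rightarrow> complex" where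
  "Mm A f VA WA i j = (\<Sum>a\<in>Pow A. \<Sum>a'\<in>Pow A. cnj (f i a) * pauli_elem VA WA a a' * f j a')"

definition Nm :: "nat set \<Rightarrow> (nat \<Rightarrow> nat set \<Rightarrow> complex) \<Rightarrow> nat set \<Rightarrow> nat set \<Rightarrow> nat \<Rightarrow> nat \<Rightarrow> complex" where
  "Nm B g VB WB i j = (\<Sum>b\<in>Pow B. \<Sum>b'\<in>Pow B. cnj (g i b) * pauli_elem VB WB b b' * g j b')"

lemma Mm_herm:
  assumes "finite WA"
  shows "Mm A f VA WA j i = cnj (Mm A f VA WA i j)"
  unfolding Mm_def by (simp add: pauli_herm[OF assms] algebra_simps) (rule sum.swap)

lemma pauli_apply:
  fixes B V W b :: "nat set"
  assumes "finite B" "V \<subseteq> B" "b \<subseteq> B"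
  shows "cmod (\<Sum>b'\<in>Pow B. pauli_elem V W b b' * u b') = cmod (u (sd b V))"
proof -
  have "(\<Sum>b'\<in>Pow B. pauli_elem V W b b' * u b')
      = (\<Sum>b'\<in>Pow B. if b' = sd b V then \<i> ^ card (V \<inter> W) * (-1) ^ card (W \<inter> b') * u b' else 0)"
    by (intro sum.cong refl) (auto simp: pauli_elem_alt sd_swap[of b])
  also have "\<dots> = \<i> ^ card (V \<inter> W) * (-1) ^ card (W \<inter> sd b V) * u (sd b V)"
    using assms by (subst sum.delta) (auto simp: sd_def)
  finally show ?thesis by (simp add: norm_mult norm_power)
qed

lemma pauli_norm:
  fixes B V W :: "nat set"
  assumes "finite B" "V \<subseteq> B"
  shows "(\<Sum>b\<in>Pow B. (cmod (\<Sum>b'\<in>Pow B. pauli_elem V W b b' * u b'))\<^sup>2) = (\<Sum>b\<in>Pow B. (cmod (u b))\<^sup>2)"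
proof -
  have "(\<Sum>b\<in>Pow B. (cmod (\<Sum>b'\<in>Pow B. pauli_elem V W b b' * u b'))\<^sup>2) = (\<Sum>b\<in>Pow B. (cmod (u (sd b V)))\<^sup>2)"
    using assms by (intro sum.cong refl) (simp add: pauli_apply)
  also have "\<dots> = (\<Sum>b\<in>Pow B. (cmod (u b))\<^sup>2)"
    by (rule sum.reindex_bij_witness[where i="\<lambda>b. sd b V" and j="\<lambda>b. sd b V"])
       (use assms in \<open>auto simp: sd_sd, auto simp: sd_def\<close>)
  finally show ?thesis .
qed

context
  fixes n :: nat and A :: "nat set" and psi :: qstate and r :: nat and f g :: "nat \<Rightarrow> nat set \<Rightarrow> complex"
  assumes AN: "A \<subseteq> {..<n}"
  and dec: "\<forall>a\<in>Pow A. \<forall>b\<in>Pow ({..<n} - A). psi (a \<union> b) = (\<Sum>i<r. f i a * g i b)"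
  and on: "orthonormal (Pow ({..<n} - A)) r g"
begin

lemma on': "i < r \<Longrightarrow> j < r \<Longrightarrow> (\<Sum>b\<in>Pow ({..<n} - A). g i b * cnj (g j b)) = (if i = j then 1 else 0)"
  using on unfolding orthonormal_def ip_def by auto

lemma rho_dec:
  assumes "a \<in> Pow A" "a' \<in> Pow A"
  shows "reduced_state n A psi a a' = (\<Sum>i<r. f i a * cnj (f i a'))"
proof -
  let ?B = "Pow ({..<n} - A)"
  have "reduced_state n A psi a a' = (\<Sum>b\<in>?B. \<Sum>i<r. \<Sum>j<r. (f i a * cnj (f j a')) * (g i b * cnj (g j b)))"
    unfolding reduced_state_def
  proof (rule sum.cong[OF refl])
    fix b assume b: "b \<in> ?B"
    have "psi (a \<union> b) = (\<Sum>i<r. f i a * g i b)" "psi (a' \<union> b) = (\<Sum>i<r. f i a' * g i b)"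
      using dec assms b by auto
    then show "psi (a \<union> b) * cnj (psi (a' \<union> b)) = (\<Sum>i<r. \<Sum>j<r. (f i a * cnj (f j a')) * (g i b * cnj (g j b)))"
      by (simp add: sum_product algebra_simps)
  qed
  also have "\<dots> = (\<Sum>i<r. \<Sum>j<r. \<Sum>b\<in>?B. (f i a * cnj (f j a')) * (g i b * cnj (g j b)))"
    by (rule swap12)
  also have "\<dots> = (\<Sum>i<r. \<Sum>j<r. (f i a * cnj (f j a')) * (\<Sum>b\<in>?B. g i b * cnj (g j b)))"
    by (simp only: sum_distrib_left)
  also have "\<dots> = (\<Sum>i<r. \<Sum>j<r. if j = i then f i a * cnj (f j a') else 0)"
    by (intro sum.cong refl) (auto simp: on')
  also have "\<dots> = (\<Sum>i<r. f i a * cnj (f i a'))" by simp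
  finally show ?thesis .
qed

lemma T_dec:
  shows "tr_rPrP n A psi VA WA = (\<Sum>i<r. \<Sum>j<r. Mm A f VA WA i j * Mm A f VA WA j i)"
proof -
  let ?P = "pauli_elem VA WA"
  let ?X = "\<lambda>a1 a2 a3 a4 i j. (cnj (f j a4) * ?P a4 a1 * f i a1) * (cnj (f i a2) * ?P a2 a3 * f j a3)"
  have "tr_rPrP n A psi VA WA = (\<Sum>a1\<in>Pow A. \<Sum>a2\<in>Pow A. \<Sum>a3\<in>Pow A. \<Sum>a4\<in>Pow A. \<Sum>i<r. \<Sum>j<r. ?X a1 a2 a3 a4 i j)"
    unfolding tr_rPrP_def
    by (intro sum.cong refl) (simp add: rho_dec sum_product sum_distrib_left sum_distrib_right algebra_simps)
  also have "\<dots> = (\<Sum>a1\<in>Pow A. \<Sum>a2\<in>Pow A. \<Sum>i<r. \<Sum>j<r. \<Sum>a3\<in>Pow A. \<Sum>a4\<in>Pow A. ?X a1 a2 a3 a4 i j)"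
    by (rule sum.cong[OF refl], rule sum.cong[OF refl], rule swap22)
  also have "\<dots> = (\<Sum>i<r. \<Sum>j<r. \<Sum>a1\<in>Pow A. \<Sum>a2\<in>Pow A. \<Sum>a3\<in>Pow A. \<Sum>a4\<in>Pow A. ?X a1 a2 a3 a4 i j)"
    by (rule swap22)
  also have "\<dots> = (\<Sum>i<r. \<Sum>j<r. Mm A f VA WA j i * Mm A f VA WA i j)"
  proof (intro sum.cong refl)
    fix i j
    have "Mm A f VA WA j i * Mm A f VA WA i j = (\<Sum>a4\<in>Pow A. \<Sum>a2\<in>Pow A. \<Sum>a1\<in>Pow A. \<Sum>a3\<in>Pow A. ?X a1 a2 a3 a4 i j)"
      unfolding Mm_def sum_product by simp
    also have "\<dots> = (\<Sum>a2\<in>Pow A. \<Sum>a1\<in>Pow A. \<Sum>a4\<in>Pow A. \<Sum>a3\<in>Pow A. ?X a1 a2 a3 a4 i j)"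
      by (rule swap12)
    also have "\<dots> = (\<Sum>a1\<in>Pow A. \<Sum>a2\<in>Pow A. \<Sum>a4\<in>Pow A. \<Sum>a3\<in>Pow A. ?X a1 a2 a3 a4 i j)"
      by (rule sum.swap)
    also have "\<dots> = (\<Sum>a1\<in>Pow A. \<Sum>a2\<in>Pow A. \<Sum>a3\<in>Pow A. \<Sum>a4\<in>Pow A. ?X a1 a2 a3 a4 i j)"
      by (rule sum.cong[OF refl], rule sum.cong[OF refl], rule sum.swap)
    finally show "(\<Sum>a1\<in>Pow A. \<Sum>a2\<in>Pow A. \<Sum>a3\<in>Pow A. \<Sum>a4\<in>Pow A. ?X a1 a2 a3 a4 i j) = Mm A f VA WA j i * Mm A f VA WA i j" by simp
  qed
  finally show ?thesis by (simp add: mult.commute)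
qed

lemma E_dec:
  assumes "VA \<subseteq> A" "WA \<subseteq> A" "VB \<subseteq> {..<n} - A" "WB \<subseteq> {..<n} - A"
  shows "pauli_expect {..<n} psi (VA \<union> VB) (WA \<union> WB)
     = (\<Sum>i<r. \<Sum>j<r. Mm A f VA WA i j * Nm ({..<n} - A) g VB WB i j)"
proof -
  let ?B = "Pow ({..<n} - A)"
  let ?PA = "pauli_elem VA WA"
  let ?PB = "pauli_elem VB WB"
  let ?Y = "\<lambda>a b a' b' i j. (cnj (f i a) * ?PA a a' * f j a') * (cnj (g i b) * ?PB b b' * g j b')"
  have "pauli_expect {..<n} psi (VA \<union> VB) (WA \<union> WB)
     = (\<Sum>a\<in>Pow A. \<Sum>b\<in>?B. \<Sum>a'\<in>Pow A. \<Sum>b'\<in>?B. \<Sum>i<r. \<Sum>j<r. ?Y a b a' b' i j)"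
    unfolding pauli_expect_def split_sum[OF AN]
  proof (intro sum.cong refl)
    fix a b a' b' assume h: "a \<in> Pow A" "b \<in> ?B" "a' \<in> Pow A" "b' \<in> ?B"
    have "pauli_elem (VA \<union> VB) (WA \<union> WB) (a \<union> b) (a' \<union> b') = ?PA a a' * ?PB b b'"
      using h assms AN by (intro pauli_split[where A=A and B="{..<n} - A"]) (auto intro: finite_subset)
    then show "cnj (psi (a \<union> b)) * pauli_elem (VA \<union> VB) (WA \<union> WB) (a \<union> b) (a' \<union> b') * psi (a' \<union> b')
        = (\<Sum>i<r. \<Sum>j<r. ?Y a b a' b' i j)"
      using h dec by (simp add: sum_product sum_distrib_left sum_distrib_right algebra_simps)
  qed
  also have "\<dots> = (\<Sum>a\<in>Pow A. \<Sum>b\<in>?B. \<Sum>i<r. \<Sum>j<r. \<Sum>a'\<in>Pow A. \<Sum>b'\<in>?B. ?Y a b a' b' i j)"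
    by (rule sum.cong[OF refl], rule sum.cong[OF refl], rule swap22)
  also have "\<dots> = (\<Sum>i<r. \<Sum>j<r. \<Sum>a\<in>Pow A. \<Sum>b\<in>?B. \<Sum>a'\<in>Pow A. \<Sum>b'\<in>?B. ?Y a b a' b' i j)"
    by (rule swap22)
  also have "\<dots> = (\<Sum>i<r. \<Sum>j<r. Mm A f VA WA i j * Nm ({..<n} - A) g VB WB i j)"
    unfolding Mm_def Nm_def sum_product by (simp add: algebra_simps)
  finally show ?thesis .
qed

lemma N_bessel:
  assumes "VB \<subseteq> {..<n} - A" "j < r"
  shows "(\<Sum>i<r. (cmod (Nm ({..<n} - A) g VB WB i j))\<^sup>2) \<le> 1"
proof -
  let ?B = "Pow ({..<n} - A)"
  define u where "u b = (\<Sum>b'\<in>?B. pauli_elem VB WB b b' * g j b')" for b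
  have "Nm ({..<n} - A) g VB WB i j = ip ?B u (g i)" for i
    unfolding Nm_def ip_def u_def by (intro sum.cong refl) (simp add: sum_distrib_left algebra_simps)
  then have "(\<Sum>i<r. (cmod (Nm ({..<n} - A) g VB WB i j))\<^sup>2) \<le> Re (ip ?B u u)"
    using bessel[OF on] by simp
  also have "\<dots> = (\<Sum>b\<in>?B. (cmod (g j b))\<^sup>2)"
    unfolding ip_self u_def using assms by (simp add: pauli_norm)
  also have "\<dots> = Re (ip ?B (g j) (g j))" by (simp add: ip_self)
  also have "\<dots> = 1" using on assms(2) unfolding orthonormal_def by simp
  finally show ?thesis .
qed

lemma T_real:
  assumes "finite WA"
  shows "tr_rPrP n A psi VA WA = of_real (\<Sum>i<r. \<Sum>j<r. (cmod (Mm A f VA WA i j))\<^sup>2)"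
  unfolding T_dec of_real_sum
proof (intro sum.cong refl)
  fix i j
  show "Mm A f VA WA i j * Mm A f VA WA j i = of_real ((cmod (Mm A f VA WA i j))\<^sup>2)"
    unfolding complex_norm_square Mm_herm[OF assms, of A f VA j i] ..
qed

lemma bound:
  assumes "VA \<subseteq> A" "WA \<subseteq> A" "VB \<subseteq> {..<n} - A" "WB \<subseteq> {..<n} - A"
  shows "(cmod (pauli_expect {..<n} psi (VA \<union> VB) (WA \<union> WB)))\<^sup>2 \<le> real r * Re (tr_rPrP n A psi VA WA)"
proof -
  let ?M = "Mm A f VA WA" and ?N = "Nm ({..<n} - A) g VB WB"
  have fWA: "finite WA" using assms(2) AN by (auto intro: finite_subset)
  have "pauli_expect {..<n} psi (VA \<union> VB) (WA \<union> WB) = (\<Sum>j<r. \<Sum>i<r. ?M i j * ?N i j)"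
    unfolding E_dec[OF assms] by (rule sum.swap)
  then have "(cmod (pauli_expect {..<n} psi (VA \<union> VB) (WA \<union> WB)))\<^sup>2
      \<le> real r * (\<Sum>j<r. (cmod (\<Sum>i<r. ?M i j * ?N i j))\<^sup>2)"
    by (simp only: cs_count)
  also have "\<dots> \<le> real r * (\<Sum>j<r. (\<Sum>i<r. (cmod (?M i j))\<^sup>2) * (\<Sum>i<r. (cmod (?N i j))\<^sup>2))"
    by (intro mult_left_mono sum_mono cs_complex) simp
  also have "\<dots> \<le> real r * (\<Sum>j<r. (\<Sum>i<r. (cmod (?M i j))\<^sup>2) * 1)"
  proof (intro mult_left_mono sum_mono)
    fix j assume "j \<in> {..<r}"
    then show "(\<Sum>i<r. (cmod (?N i j))\<^sup>2) \<le> 1" using N_bessel[OF assms(3)] by simp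
  qed (simp_all add: sum_nonneg)
  also have "\<dots> = real r * (\<Sum>i<r. \<Sum>j<r. (cmod (?M i j))\<^sup>2)"
  proof -
    have "(\<Sum>j<r. \<Sum>i<r. (cmod (?M i j))\<^sup>2) = (\<Sum>i<r. \<Sum>j<r. (cmod (?M i j))\<^sup>2)"
      by (rule sum.swap)
    then show ?thesis by (simp only: mult_1_right)
  qed
  also have "\<dots> = real r * Re (tr_rPrP n A psi VA WA)"
    unfolding T_real[OF fWA] by simp
  finally show ?thesis .
qed

end

context
  fixes n :: nat and A :: "nat set" and psi :: qstate and r :: nat and f g :: "nat \<Rightarrow> nat set \<Rightarrow> complex"
  assumes AN: "A \<subseteq> {..<n}"
  and dec: "\<forall>a\<in>Pow A. \<forall>b\<in>Pow ({..<n} - A). psi (a \<union> b) = (\<Sum>i<r. f i a * g i b)"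
  and on: "orthonormal (Pow ({..<n} - A)) r g"
begin

lemmas E_dec5 = E_dec[OF AN dec on]
lemmas T_dec5 = T_dec[OF AN dec on]

lemma on5: "i < r \<Longrightarrow> j < r \<Longrightarrow> (\<Sum>b\<in>Pow ({..<n} - A). g i b * cnj (g j b)) = (if i = j then 1 else 0)"
  using on unfolding orthonormal_def ip_def by auto

lemma delta2:
  assumes "finite S" "finite T" "a \<in> S" "b \<in> T"
  shows "(\<Sum>x\<in>S. \<Sum>y\<in>T. if a = x then (if b = y then F x y else 0) else 0) = F a b"
proof -
  have "(\<Sum>x\<in>S. \<Sum>y\<in>T. if a = x then (if b = y then F x y else 0) else 0) = (\<Sum>x\<in>S. if a = x then F x b else 0)"
  proof (rule sum.cong[OF refl])
    fix x assume "x \<in> S"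
    show "(\<Sum>y\<in>T. if a = x then (if b = y then F x y else 0) else 0) = (if a = x then F x b else 0)"
      using assms by (cases "a = x") (simp_all add: sum.delta')
  qed
  also have "\<dots> = F a b" using assms by (simp add: sum.delta')
  finally show ?thesis .
qed

lemma N_complete:
  assumes "i < r" "j < r" "k < r" "l < r"
  shows "(\<Sum>p\<in>Pow ({..<n} - A) \<times> Pow ({..<n} - A).
            Nm ({..<n} - A) g (fst p) (snd p) i j * Nm ({..<n} - A) g (fst p) (snd p) k l)
       = (if k = j then (if i = l then 2 ^ card ({..<n} - A) else 0) else 0)"
proof -
  let ?B = "Pow ({..<n} - A)"
  let ?K = "2 ^ card ({..<n} - A) :: complex"
  let ?c = "\<lambda>b b' c c'. cnj (g i b) * g j b' * cnj (g k c) * g l c'"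
  let ?P = "\<lambda>p. pauli_elem (fst p) (snd p)"
  have fB: "finite ({..<n} - A)" by simp
  have "(\<Sum>p\<in>?B \<times> ?B. Nm ({..<n} - A) g (fst p) (snd p) i j * Nm ({..<n} - A) g (fst p) (snd p) k l)
      = (\<Sum>p\<in>?B \<times> ?B. \<Sum>b\<in>?B. \<Sum>c\<in>?B. \<Sum>b'\<in>?B. \<Sum>c'\<in>?B. ?c b b' c c' * (?P p b b' * ?P p c c'))"
    unfolding Nm_def sum_product by (intro sum.cong refl) (simp add: algebra_simps)
  also have "\<dots> = (\<Sum>b\<in>?B. \<Sum>c\<in>?B. \<Sum>p\<in>?B \<times> ?B. \<Sum>b'\<in>?B. \<Sum>c'\<in>?B. ?c b b' c c' * (?P p b b' * ?P p c c'))"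
    by (rule swap12)
  also have "\<dots> = (\<Sum>b\<in>?B. \<Sum>c\<in>?B. \<Sum>b'\<in>?B. \<Sum>c'\<in>?B. \<Sum>p\<in>?B \<times> ?B. ?c b b' c c' * (?P p b b' * ?P p c c'))"
    by (rule sum.cong[OF refl], rule sum.cong[OF refl], rule swap12)
  also have "\<dots> = (\<Sum>b\<in>?B. \<Sum>c\<in>?B. \<Sum>b'\<in>?B. \<Sum>c'\<in>?B. if c = b' then (if b = c' then ?c b b' c c' * ?K else 0) else 0)"
  proof (intro sum.cong refl)
    fix b b' c c' assume h: "b \<in> ?B" "b' \<in> ?B" "c \<in> ?B" "c' \<in> ?B"
    have "(\<Sum>p\<in>?B \<times> ?B. ?P p b b' * ?P p c c') = (if b = c' \<and> c = b' then ?K else 0)"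
      using pauli_complete[OF fB, of b b' c c'] h by (simp add: case_prod_unfold)
    then show "(\<Sum>p\<in>?B \<times> ?B. ?c b b' c c' * (?P p b b' * ?P p c c'))
        = (if c = b' then (if b = c' then ?c b b' c c' * ?K else 0) else 0)"
      by (simp add: sum_distrib_left[symmetric])
  qed
  also have "\<dots> = (\<Sum>b\<in>?B. \<Sum>c\<in>?B. ?c b c c b * ?K)"
    by (intro sum.cong refl delta2) auto
  also have "\<dots> = (\<Sum>b\<in>?B. \<Sum>c\<in>?B. ?K * ((g l b * cnj (g i b)) * (g j c * cnj (g k c))))"
    by (intro sum.cong refl) (simp add: algebra_simps)
  also have "\<dots> = ?K * ((\<Sum>b\<in>?B. g l b * cnj (g i b)) * (\<Sum>c\<in>?B. g j c * cnj (g k c)))"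
    unfolding sum_product by (simp only: sum_distrib_left)
  also have "\<dots> = (if k = j then (if i = l then ?K else 0) else 0)"
    using assms by (simp add: on5)
  finally show ?thesis .
qed

lemma sumsq:
  assumes "VA \<subseteq> A" "WA \<subseteq> A"
  shows "(\<Sum>p\<in>Pow ({..<n} - A) \<times> Pow ({..<n} - A). (pauli_expect {..<n} psi (VA \<union> fst p) (WA \<union> snd p))\<^sup>2)
     = 2 ^ card ({..<n} - A) * tr_rPrP n A psi VA WA"
proof -
  let ?B = "Pow ({..<n} - A)"
  let ?K = "2 ^ card ({..<n} - A) :: complex"
  let ?M = "Mm A f VA WA" and ?N = "\<lambda>p. Nm ({..<n} - A) g (fst p) (snd p)"
  have "(\<Sum>p\<in>?B \<times> ?B. (pauli_expect {..<n} psi (VA \<union> fst p) (WA \<union> snd p))\<^sup>2)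
     = (\<Sum>p\<in>?B \<times> ?B. \<Sum>i<r. \<Sum>k<r. \<Sum>j<r. \<Sum>l<r. (?M i j * ?M k l) * (?N p i j * ?N p k l))"
  proof (intro sum.cong refl)
    fix p assume "p \<in> ?B \<times> ?B"
    then show "(pauli_expect {..<n} psi (VA \<union> fst p) (WA \<union> snd p))\<^sup>2
      = (\<Sum>i<r. \<Sum>k<r. \<Sum>j<r. \<Sum>l<r. (?M i j * ?M k l) * (?N p i j * ?N p k l))"
      unfolding power2_eq_square using assms E_dec5[OF assms, of "fst p" "snd p"]
      by (auto simp: sum_product algebra_simps)
  qed
  also have "\<dots> = (\<Sum>i<r. \<Sum>k<r. \<Sum>p\<in>?B \<times> ?B. \<Sum>j<r. \<Sum>l<r. (?M i j * ?M k l) * (?N p i j * ?N p k l))"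
    by (rule swap12)
  also have "\<dots> = (\<Sum>i<r. \<Sum>k<r. \<Sum>j<r. \<Sum>l<r. \<Sum>p\<in>?B \<times> ?B. (?M i j * ?M k l) * (?N p i j * ?N p k l))"
    by (rule sum.cong[OF refl], rule sum.cong[OF refl], rule swap12)
  also have "\<dots> = (\<Sum>i<r. \<Sum>k<r. \<Sum>j<r. \<Sum>l<r. if k = j then (if i = l then ?K * (?M i j * ?M k l) else 0) else 0)"
    by (intro sum.cong refl) (simp add: sum_distrib_left[symmetric] N_complete)
  also have "\<dots> = (\<Sum>i<r. \<Sum>k<r. ?K * (?M i k * ?M k i))"
    by (intro sum.cong refl delta2) auto
  also have "\<dots> = ?K * tr_rPrP n A psi VA WA"
    unfolding T_dec5 by (simp add: sum_distrib_left)
  finally show ?thesis .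
qed

end

lemma expect_real:
  assumes "finite W"
  shows "cnj (pauli_expect Q psi V W) = pauli_expect Q psi V W"
proof -
  have "cnj (pauli_expect Q psi V W) = (\<Sum>t\<in>Pow Q. \<Sum>s\<in>Pow Q. cnj (psi s) * pauli_elem V W s t * psi t)"
    unfolding pauli_expect_def by (simp add: pauli_herm[OF assms] algebra_simps)
  also have "\<dots> = pauli_expect Q psi V W" unfolding pauli_expect_def by (rule sum.swap)
  finally show ?thesis .
qed

lemma schmidt_exists:
  fixes A B :: "nat set"
  assumes "finite A"
  shows "\<exists>r f g. \<forall>a\<in>Pow A. \<forall>b\<in>Pow B. psi (a \<union> b) = (\<Sum>i<r. f i a * (g :: nat \<Rightarrow> nat set \<Rightarrow> complex) i b)"
proof -
  obtain h where h: "bij_betw h {0..<card (Pow A)} (Pow A)"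
    using ex_bij_betw_nat_finite[of "Pow A"] assms by auto
  define f where "f i a = (if a = h i then 1 else 0 :: complex)" for i a
  define g where "g i b = psi (h i \<union> b)" for i b
  have "psi (a \<union> b) = (\<Sum>i<card (Pow A). f i a * g i b)" if "a \<in> Pow A" for a b
  proof -
    have "(\<Sum>i<card (Pow A). f i a * g i b) = (\<Sum>i\<in>{0..<card (Pow A)}. (\<lambda>a'. if a = a' then psi (a' \<union> b) else 0) (h i))"
      unfolding f_def g_def by (intro sum.cong) auto
    also have "\<dots> = (\<Sum>a'\<in>Pow A. if a = a' then psi (a' \<union> b) else 0)"
      using sum.reindex_bij_betw[OF h] .
    also have "\<dots> = psi (a \<union> b)" using that assms by (simp add: sum.delta)
    finally show ?thesis by simp
  qed
  then show ?thesis by blast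
qed

lemma div_helper:
  fixes a r x t :: real
  assumes "0 < a" "0 < r" "x \<le> r * t"
  shows "x / (a * r) \<le> t / a"
proof -
  have "x / (a * r) = (x / r) / a" by simp
  also have "\<dots> \<le> t / a" using assms by (intro divide_right_mono) (auto simp: divide_le_eq mult.commute)
  finally show ?thesis .
qed

theorem lemma1:
  fixes n :: nat and A V W :: "nat set" and psi :: qstate
  assumes "A \<subseteq> {..<n}" and "V \<subseteq> {..<n}" and "W \<subseteq> {..<n}"
    and "(\<Sum>s\<in>Pow {..<n}. (cmod (psi s))\<^sup>2) = 1"
  shows "pauli_marginal n A psi (V \<inter> A) (W \<inter> A)
           = Re (tr_rPrP n A psi (V \<inter> A) (W \<inter> A)) / 2 ^ card A
       \<and> Re (tr_rPrP n A psi (V \<inter> A) (W \<inter> A)) / 2 ^ card A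
           \<ge> (Re (pauli_expect {..<n} psi V W))\<^sup>2 / (2 ^ card A * real (schmidt_rank n A psi))"
proof -
  note AN = assms(1)
  define B where "B = {..<n} - A"
  define VA where "VA = V \<inter> A"
  define WA where "WA = W \<inter> A"
  have fA: "finite A" using AN by (auto intro: finite_subset)
  have fB: "finite B" unfolding B_def by simp
  define P where "P r \<longleftrightarrow> (\<exists>f g :: nat \<Rightarrow> nat set \<Rightarrow> complex.
        \<forall>a\<in>Pow A. \<forall>b\<in>Pow ({..<n} - A). psi (a \<union> b) = (\<Sum>i<r. f i a * g i b))" for r
  have sr: "schmidt_rank n A psi = (LEAST r. P r)" unfolding schmidt_rank_def P_def ..
  have "\<exists>r. P r" unfolding P_def using schmidt_exists[OF fA] by blast
  then have "P (schmidt_rank n A psi)" unfolding sr by (rule LeastI_ex)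
  then obtain f0 g0 where dec0: "\<forall>a\<in>Pow A. \<forall>b\<in>Pow B. psi (a \<union> b) = (\<Sum>i<schmidt_rank n A psi. f0 i a * g0 i b)"
    unfolding P_def B_def by blast
  obtain r f g where r: "r \<le> schmidt_rank n A psi" and on: "orthonormal (Pow B) r g"
    and e: "\<forall>a. \<forall>b\<in>Pow B. (\<Sum>i<schmidt_rank n A psi. f0 i a * g0 i b) = (\<Sum>i<r. f i a * g i b)"
    using gram_schmidt[of "Pow B" "schmidt_rank n A psi" f0 g0] fB by auto
  have dec: "\<forall>a\<in>Pow A. \<forall>b\<in>Pow ({..<n} - A). psi (a \<union> b) = (\<Sum>i<r. f i a * g i b)"
    using dec0 e unfolding B_def by auto
  note on' = on[unfolded B_def]
  have VA: "VA \<subseteq> A" and WA: "WA \<subseteq> A" unfolding VA_def WA_def by auto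
  have fWA: "finite WA" using WA fA by (auto intro: finite_subset)
  define T where "T = tr_rPrP n A psi VA WA"
  have Tr: "T = of_real (Re T)" and T0: "Re T \<ge> 0"
    using T_real[OF AN dec on' fWA] unfolding T_def by (auto intro!: sum_nonneg)
  have cB: "card B = n - card A" unfolding B_def using AN fA by (simp add: card_Diff_subset)
  have "card A \<le> n" using card_mono[OF _ AN] by simp
  then have cardn: "card A + card B = n" using cB by simp
  let ?E = "\<lambda>p. pauli_expect {..<n} psi (VA \<union> fst p) (WA \<union> snd p)"
  have Ereal: "?E p = of_real (Re (?E p))" if "p \<in> Pow B \<times> Pow B" for p
  proof -
    have "finite (WA \<union> snd p)" using that fWA fB by (auto dest: finite_subset)
    then have "?E p \<in> \<real>" unfolding Reals_cnj_iff by (rule expect_real)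
    then show ?thesis by simp
  qed
  have "pauli_marginal n A psi VA WA = (\<Sum>p\<in>Pow B \<times> Pow B. (Re (?E p))\<^sup>2 / 2 ^ n)"
    unfolding pauli_marginal_def pauli_dist_def B_def by (simp add: case_prod_unfold)
  also have "\<dots> = Re (\<Sum>p\<in>Pow B \<times> Pow B. (?E p)\<^sup>2) / 2 ^ n"
  proof -
    have "(\<Sum>p\<in>Pow B \<times> Pow B. (Re (?E p))\<^sup>2) = Re (\<Sum>p\<in>Pow B \<times> Pow B. (?E p)\<^sup>2)"
      unfolding Re_sum
    proof (rule sum.cong[OF refl])
      fix p assume p: "p \<in> Pow B \<times> Pow B"
      have "(?E p)\<^sup>2 = of_real ((Re (?E p))\<^sup>2)" by (subst Ereal[OF p]) simp
      then show "(Re (?E p))\<^sup>2 = Re ((?E p)\<^sup>2)" by simp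
    qed
    then show ?thesis by (simp only: sum_divide_distrib[symmetric])
  qed
  also have "\<dots> = Re (2 ^ card B * T) / 2 ^ n"
    using sumsq[OF AN dec on' VA WA] unfolding B_def T_def by (simp only:)
  also have "\<dots> = Re T / 2 ^ card A"
  proof -
    have "(2::complex) ^ card B * T = of_real (2 ^ card B * Re T)"
      by (subst Tr) simp
    then have "Re (2 ^ card B * T) = 2 ^ card B * Re T" by simp
    moreover have "(2::real) ^ n = 2 ^ card A * 2 ^ card B" using cardn by (simp flip: power_add)
    ultimately show ?thesis by simp
  qed
  finally have part1: "pauli_marginal n A psi VA WA = Re T / 2 ^ card A" .
  have VV: "V = VA \<union> (V \<inter> B)" and WW: "W = WA \<union> (W \<inter> B)"
    using assms(2,3) unfolding VA_def WA_def B_def by auto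
  have "(Re (pauli_expect {..<n} psi V W))\<^sup>2 \<le> (cmod (pauli_expect {..<n} psi V W))\<^sup>2"
  proof -
    have "\<bar>Re (pauli_expect {..<n} psi V W)\<bar> \<le> cmod (pauli_expect {..<n} psi V W)" by (rule abs_Re_le_cmod)
    then have "\<bar>Re (pauli_expect {..<n} psi V W)\<bar>\<^sup>2 \<le> (cmod (pauli_expect {..<n} psi V W))\<^sup>2"
      by (rule power_mono) simp
    then show ?thesis by simp
  qed
  also have "\<dots> \<le> real r * Re T"
  proof -
    have s1: "V \<inter> B \<subseteq> {..<n} - A" and s2: "W \<inter> B \<subseteq> {..<n} - A" unfolding B_def by auto
    have "(cmod (pauli_expect {..<n} psi (VA \<union> (V \<inter> B)) (WA \<union> (W \<inter> B))))\<^sup>2 \<le> real r * Re T"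
      unfolding T_def by (rule bound[OF AN dec on' VA WA s1 s2])
    then show ?thesis unfolding VV[symmetric] WW[symmetric] .
  qed
  also have "\<dots> \<le> real (schmidt_rank n A psi) * Re T"
    using r T0 by (intro mult_right_mono) auto
  finally have bnd: "(Re (pauli_expect {..<n} psi V W))\<^sup>2 \<le> real (schmidt_rank n A psi) * Re T" .
  have part2: "Re T / 2 ^ card A \<ge> (Re (pauli_expect {..<n} psi V W))\<^sup>2 / (2 ^ card A * real (schmidt_rank n A psi))"
  proof (cases "schmidt_rank n A psi = 0")
    case True
    then show ?thesis using T0 by simp
  next
    case False
    then show ?thesis using bnd div_helper[of "2 ^ card A" "real (schmidt_rank n A psi)"] by simp
  qed
  show ?thesis using part1 part2 unfolding VA_def WA_def T_def by simp
qed

end
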